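(* Let $G$ be a cubic graph of order $2n\geq 8$. If there exist a perfect matching $M$ of $G$ and a matching $N$ of $G$ with $|N|=n-1$ such that $M\cap N=\emptyset$, then $\chi'_{[n-1]}(G)=4$.
   Context: All graphs are finite, simple (no loops, no parallel edges), connected and cubic. For a positive integer $k$, a $[k]$-matching of $G$ is a matching of $G$ with exactly $k$ edges. The excessive $[k]$-index $\chi'_{[k]}(G)$ is the minimum number of $[k]$-matchings of $G$ whose union is $E(G)$; if some edge of $G$ lies in no $[k]$-matching, one sets $\chi'_{[k]}(G)=\infty$. *)

theory Defs
  imports "HOL-Library.Extended_Nat"
begin

definition simple_graph :: "'a set \<Rightarrow> 'a set set \<Rightarrow> bool" where
  "simple_graph V E \<longleftrightarrow> finite V \<and>
     (\<forall>e\<in>E. \<exists>u v. u \<noteq> v \<and> u \<in> V \<and> v \<in> V \<and> e = {u, v})"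

definition degree :: "'a set set \<Rightarrow> 'a \<Rightarrow> nat" where
  "degree E v = card {e \<in> E. v \<in> e}"

definition cubic :: "'a set \<Rightarrow> 'a set set \<Rightarrow> bool" where
  "cubic V E \<longleftrightarrow> (\<forall>v\<in>V. degree E v = 3)"

definition adjacent :: "'a set set \<Rightarrow> 'a \<Rightarrow> 'a \<Rightarrow> bool" where
  "adjacent E u v \<longleftrightarrow> {u, v} \<in> E"

definition connected_graph :: "'a set \<Rightarrow> 'a set set \<Rightarrow> bool" where
  "connected_graph V E \<longleftrightarrow> (\<forall>u\<in>V. \<forall>v\<in>V. (adjacent E)\<^sup>*\<^sup>* u v)"

definition matching :: "'a set set \<Rightarrow> 'a set set \<Rightarrow> bool" where
  "matching E M \<longleftrightarrow> M \<subseteq> E \<and> (\<forall>e1\<in>M. \<forall>e2\<in>M. e1 \<noteq> e2 \<longrightarrow> e1 \<inter> e2 = {})"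

definition perfect_matching :: "'a set \<Rightarrow> 'a set set \<Rightarrow> 'a set set \<Rightarrow> bool" where
  "perfect_matching V E M \<longleftrightarrow> matching E M \<and> \<Union>M = V"

definition k_matching :: "'a set set \<Rightarrow> nat \<Rightarrow> 'a set set \<Rightarrow> bool" where
  "k_matching E k M \<longleftrightarrow> matching E M \<and> card M = k"

definition excessive_index :: "'a set set \<Rightarrow> nat \<Rightarrow> enat" where
  "excessive_index E k =
     (if \<forall>e\<in>E. \<exists>M. k_matching E k M \<and> e \<in> M
      then enat (LEAST t. \<exists>S. finite S \<and> card S = t \<and> (\<forall>M\<in>S. k_matching E k M) \<and> \<Union>S = E)
      else \<infinity>)"

end

theory Submission imports Defs begin

lemma pathcase:
  assumes "x\<noteq>y" "x\<noteq>z" "y\<noteq>z" "distinct [w,w1,w2,b1,b2]"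
  "x \<in> {w,w1} \<or> y \<in> {w,w1}" "x \<in> {w1,b1} \<or> y \<in> {w1,b1}" "x \<in> {w,w2} \<or> y \<in> {w,w2}" "x \<in> {w2,b2} \<or> y \<in> {w2,b2}"
  "x \<in> {w,w1} \<or> z \<in> {w,w1}" "x \<in> {w1,b1} \<or> z \<in> {w1,b1}" "x \<in> {w,w2} \<or> z \<in> {w,w2}" "x \<in> {w2,b2} \<or> z \<in> {w2,b2}"
  shows False
  using assms by simp (smt (verit))

lemma tricase:
  assumes "x\<noteq>y" "distinct [w,w1,w2]"
  "x \<in> {w,w1} \<or> y \<in> {w,w1}" "x \<in> {w1,w2} \<or> y \<in> {w1,w2}" "x \<in> {w,w2} \<or> y \<in> {w,w2}"
  shows "x \<in> {w,w1,w2} \<and> y \<in> {w,w1,w2}"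
  using assms by simp (smt (verit))

lemma tri_onto:
  assumes "x \<in> {w,w1,w2}" "y \<in> {w,w1,w2}" "z \<in> {w,w1,w2}" "x\<noteq>y" "x\<noteq>z" "y\<noteq>z"
  shows "w \<in> {x,y,z} \<and> w1 \<in> {x,y,z} \<and> w2 \<in> {x,y,z}"
  using assms by simp (smt (verit))

lemma flip:
  assumes "m p \<in> {r,s} \<or> m q \<in> {r,s}" "m (m p) = p" "m (m q) = q"
  shows "m r \<in> {p,q} \<or> m s \<in> {p,q}"
  using assms by auto

lemma core:
  fixes m :: "'a \<Rightarrow> 'a"
  assumes inv: "\<And>x. x \<in> {u,u1,u2,a1,a2,w,w1,w2,b1,b2} \<Longrightarrow> m (m x) = x"
  and D: "distinct [u,u1,u2,w,w1,w2]"
  and Da: "a1 \<notin> {u,u1,w,w1,w2,b1,b2}" "a2 \<notin> {u,u2,w,w1,w2,b1,b2}" "a1 \<noteq> a2"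
  and Db: "b1 \<notin> {w,w1,u,u1,u2}" "b2 \<notin> {w,w2,u,u1,u2}" "b1 \<noteq> b2"
  and Ta: "a1 = u2 \<longleftrightarrow> a2 = u1" and Tb: "b1 = w2 \<longleftrightarrow> b2 = w1"
  and bad: "\<And>p q r s. (p,q) \<in> {(u,u1),(u1,a1),(u,u2),(u2,a2)} \<Longrightarrow>
                     (r,s) \<in> {(w,w1),(w1,b1),(w,w2),(w2,b2)} \<Longrightarrow> m p \<in> {r,s} \<or> m q \<in> {r,s}"
  shows "a1 = u2 \<and> b1 = w2 \<and> m u \<in> {w,w1,w2} \<and> m u1 \<in> {w,w1,w2} \<and> m u2 \<in> {w,w1,w2}
         \<and> m w \<in> {u,u1,u2} \<and> m w1 \<in> {u,u1,u2} \<and> m w2 \<in> {u,u1,u2}"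
proof -
  have iv: "m (m u) = u" "m (m u1) = u1" "m (m u2) = u2" "m (m a1) = a1" "m (m a2) = a2"
     "m (m w) = w" "m (m w1) = w1" "m (m w2) = w2" "m (m b1) = b1" "m (m b2) = b2"
    by (simp_all add: inv)
  have inj: "m x \<noteq> m y" if "m (m x) = x" "m (m y) = y" "x \<noteq> y" for x y
    using that by metis
  have iU: "m u \<noteq> m u1" "m u \<noteq> m u2" "m u1 \<noteq> m u2"
    using inj iv D by auto
  have iW: "m w \<noteq> m w1" "m w \<noteq> m w2" "m w1 \<noteq> m w2"
    using inj iv D by auto
  have B: "b1 = w2"
  proof (rule ccontr)
    assume nb: "b1 \<noteq> w2"
    hence nb2: "b2 \<noteq> w1" using Tb by simp
    have dW: "distinct [w,w1,w2,b1,b2]" using D Db nb nb2 by auto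
    show False
      apply (rule pathcase[OF iU dW])
      using bad[of u u1 w w1] bad[of u u1 w1 b1] bad[of u u1 w w2] bad[of u u1 w2 b2]
        bad[of u u2 w w1] bad[of u u2 w1 b1] bad[of u u2 w w2] bad[of u u2 w2 b2]
      by simp_all
  qed
  have A: "a1 = u2"
  proof (rule ccontr)
    assume na: "a1 \<noteq> u2"
    hence na2: "a2 \<noteq> u1" using Ta by simp
    have dU: "distinct [u,u1,u2,a1,a2]" using D Da na na2 by auto
    have fl: "m r \<in> {p,q} \<or> m s \<in> {p,q}" if "(p,q) \<in> {(u,u1),(u1,a1),(u,u2),(u2,a2)}"
        "(r,s) \<in> {(w,w1),(w1,b1),(w,w2),(w2,b2)}" for p q r s
    proof (rule flip[of m p r s q, OF bad[OF that]])
      show "m (m p) = p" "m (m q) = q" using that(1) iv by auto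
    qed
    show False
      apply (rule pathcase[OF iW dU])
      using fl[of u u1 w w1] fl[of u1 a1 w w1] fl[of u u2 w w1] fl[of u2 a2 w w1]
        fl[of u u1 w w2] fl[of u1 a1 w w2] fl[of u u2 w w2] fl[of u2 a2 w w2]
      by simp_all
  qed
  have A2: "a2 = u1" using A Ta by simp
  have B2: "b2 = w1" using B Tb by simp
  have dw: "distinct [w,w1,w2]" using D by simp
  have h1: "m u \<in> {w,w1,w2} \<and> m u1 \<in> {w,w1,w2}"
    apply (rule tricase[OF iU(1) dw])
    using bad[of u u1 w w1] bad[of u u1 w1 b1] bad[of u u1 w w2] B by simp_all
  have h2: "m u \<in> {w,w1,w2} \<and> m u2 \<in> {w,w1,w2}"
    apply (rule tricase[OF iU(2) dw])
    using bad[of u u2 w w1] bad[of u u2 w1 b1] bad[of u u2 w w2] B by simp_all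
  have on: "w \<in> {m u, m u1, m u2} \<and> w1 \<in> {m u, m u1, m u2} \<and> w2 \<in> {m u, m u1, m u2}"
    using tri_onto[of "m u" w w1 w2 "m u1" "m u2"] h1 h2 iU by blast
  have W: "m w \<in> {u,u1,u2} \<and> m w1 \<in> {u,u1,u2} \<and> m w2 \<in> {u,u1,u2}"
    using on iv by auto
  show ?thesis using A B h1 h2 W by blast
qed

locale cg =
  fixes V :: "'a set" and E :: "'a set set"
  assumes sg: "simple_graph V E" and cub: "cubic V E"
begin

lemma finV: "finite V" using sg by (simp add: simple_graph_def)

lemma edge: "e \<in> E \<Longrightarrow> \<exists>x y. x \<noteq> y \<and> x \<in> V \<and> y \<in> V \<and> e = {x,y}"
  using sg by (simp add: simple_graph_def)

lemma edge_sub: "e \<in> E \<Longrightarrow> e \<subseteq> V" using edge by blast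

lemma finE: "finite E"
proof -
  have "E \<subseteq> Pow V" using edge_sub by blast
  moreover have "finite (Pow V)" using finV by simp
  ultimately show ?thesis by (rule finite_subset)
qed

lemma card_edge: "e \<in> E \<Longrightarrow> card e = 2"
proof -
  assume "e \<in> E"
  then obtain x y where "x \<noteq> y" "e = {x,y}" using edge by blast
  thus ?thesis by simp
qed

lemma edge_ne: "{x,y} \<in> E \<Longrightarrow> x \<noteq> y"
  using card_edge[of "{x,y}"] by (cases "x=y") auto

lemma edge_V: "{x,y} \<in> E \<Longrightarrow> x \<in> V \<and> y \<in> V" using edge_sub by blast

lemma edge_at: "e \<in> E \<Longrightarrow> v \<in> e \<Longrightarrow> \<exists>t. e = {v,t} \<and> t \<noteq> v"
proof -
  assume a: "e \<in> E" "v \<in> e"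
  then obtain x y where xy: "x \<noteq> y" "e = {x,y}" using edge by blast
  show ?thesis
  proof (cases "v = x")
    case True thus ?thesis using xy by blast
  next
    case False hence "v = y" using a xy by blast
    thus ?thesis using xy by (intro exI[of _ x]) auto
  qed
qed

lemma deg3: "v \<in> V \<Longrightarrow> card {e\<in>E. v \<in> e} = 3"
  using cub by (simp add: cubic_def degree_def)

lemma no4: assumes "v \<in> V" "e1 \<in> E" "e2 \<in> E" "e3 \<in> E" "e4 \<in> E"
   "v \<in> e1" "v \<in> e2" "v \<in> e3" "v \<in> e4"
   "e1 \<noteq> e2" "e1 \<noteq> e3" "e1 \<noteq> e4" "e2 \<noteq> e3" "e2 \<noteq> e4" "e3 \<noteq> e4"
 shows False
proof -
  have "{e1,e2,e3,e4} \<subseteq> {e\<in>E. v \<in> e}" using assms by blast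
  moreover have "finite {e\<in>E. v \<in> e}" using finE by simp
  ultimately have "card {e1,e2,e3,e4} \<le> card {e\<in>E. v \<in> e}" by (rule card_mono[rotated])
  hence "card {e1,e2,e3,e4} \<le> 3" using deg3[OF assms(1)] by simp
  thus False using assms by auto
qed

lemma exists3: assumes "v \<in> V" "e1 \<in> E" "e2 \<in> E" "v \<in> e1" "v \<in> e2"
  shows "\<exists>e3\<in>E. v \<in> e3 \<and> e3 \<noteq> e1 \<and> e3 \<noteq> e2"
proof (rule ccontr)
  assume "\<not> ?thesis"
  hence "{e\<in>E. v \<in> e} \<subseteq> {e1,e2}" by auto
  moreover have "card {e1,e2} \<le> 2" by (simp add: card_insert_if)
  ultimately have "card {e\<in>E. v \<in> e} \<le> 2"
    using card_mono[of "{e1,e2}" "{e\<in>E. v \<in> e}"] by simp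
  thus False using deg3[OF assms(1)] by simp
qed

lemma all3: assumes "v \<in> V" "e1 \<in> E" "e2 \<in> E" "e3 \<in> E" "v \<in> e1" "v \<in> e2" "v \<in> e3"
  "e1 \<noteq> e2" "e1 \<noteq> e3" "e2 \<noteq> e3" "e \<in> E" "v \<in> e"
  shows "e = e1 \<or> e = e2 \<or> e = e3"
proof (rule ccontr)
  assume "\<not> (e = e1 \<or> e = e2 \<or> e = e3)"
  thus False using no4[OF assms(1) assms(2,3,4) assms(11) assms(5-7) assms(12)] assms(8-10) by auto
qed

lemma handshake: "2 * card E = 3 * card V"
proof -
  have "(\<Sum>v\<in>V. card {e\<in>E. v \<in> e}) = (\<Sum>v\<in>V. \<Sum>e\<in>E. if v \<in> e then 1 else 0)"
    using finE by (simp add: sum.If_cases Int_def)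
  also have "\<dots> = (\<Sum>e\<in>E. \<Sum>v\<in>V. if v \<in> e then 1 else 0)" by (rule sum.swap)
  also have "\<dots> = (\<Sum>e\<in>E. card e)"
  proof (rule sum.cong[OF refl])
    fix e assume "e \<in> E"
    hence "e \<subseteq> V" by (rule edge_sub)
    hence "{v\<in>V. v \<in> e} = e" by blast
    thus "(\<Sum>v\<in>V. if v \<in> e then 1 else 0) = card e" using finV
      by (simp add: sum.If_cases Int_absorb1 \<open>e \<subseteq> V\<close> Int_commute)
  qed
  also have "\<dots> = (\<Sum>e\<in>E. 2)" using card_edge by simp
  finally have "(\<Sum>v\<in>V. card {e\<in>E. v \<in> e}) = 2 * card E" by simp
  moreover have "(\<Sum>v\<in>V. card {e\<in>E. v \<in> e}) = 3 * card V" using deg3 by simp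
  ultimately show ?thesis by simp
qed

lemma matching_unique_edge: "matching E M \<Longrightarrow> e1 \<in> M \<Longrightarrow> e2 \<in> M \<Longrightarrow> v \<in> e1 \<Longrightarrow> v \<in> e2 \<Longrightarrow> e1 = e2"
proof (rule ccontr)
  assume a: "matching E M" "e1 \<in> M" "e2 \<in> M" "v \<in> e1" "v \<in> e2" "e1 \<noteq> e2"
  hence "e1 \<inter> e2 = {}" unfolding matching_def by simp
  thus False using a by auto
qed

lemma matching_unique: "matching E M \<Longrightarrow> {x,y} \<in> M \<Longrightarrow> {x,z} \<in> M \<Longrightarrow> y = z"
proof -
  assume a: "matching E M" "{x,y} \<in> M" "{x,z} \<in> M"
  hence 1: "{x,y} = {x,z}" using matching_unique_edge[of M "{x,y}" "{x,z}" x] by simp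
  have "{x,y} \<in> E" using a unfolding matching_def by auto
  hence "x \<noteq> y" using edge_ne by simp
  thus ?thesis using 1 by (auto simp: doubleton_eq_iff)
qed

lemma matching_fin: "matching E M \<Longrightarrow> finite M"
  using finE unfolding matching_def using finite_subset by auto

lemma card_Union_matching: "matching E M \<Longrightarrow> card (\<Union>M) = 2 * card M"
proof -
  assume m: "matching E M"
  have "card (\<Union>M) = sum card M"
  proof (rule card_Union_disjoint)
    show "pairwise disjnt M" using m unfolding matching_def pairwise_def disjnt_def by simp
    fix A assume "A \<in> M"
    hence "A \<in> E" using m unfolding matching_def by auto
    thus "finite A" using edge by force
  qed
  also have "\<dots> = sum (\<lambda>_. 2) M" using m card_edge unfolding matching_def
    by (intro sum.cong) auto
  finally show ?thesis by simp
qed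

lemma pm_card: "perfect_matching V E M \<Longrightarrow> card V = 2 * card M"
  using card_Union_matching unfolding perfect_matching_def by auto

lemma pm_edge: "perfect_matching V E M \<Longrightarrow> v \<in> V \<Longrightarrow> \<exists>e\<in>M. v \<in> e"
  unfolding perfect_matching_def by blast

end

definition swap :: "'a set set \<Rightarrow> 'a set \<Rightarrow> 'a set set" where
  "swap M f = {e\<in>M. e \<inter> f = {}} \<union> {f}"

definition cover4 :: "'a set set \<Rightarrow> nat \<Rightarrow> bool" where
  "cover4 E k \<longleftrightarrow> (\<exists>A1 A2 A3 A4. k_matching E k A1 \<and> k_matching E k A2 \<and>
      k_matching E k A3 \<and> k_matching E k A4 \<and> A1 \<union> A2 \<union> A3 \<union> A4 = E)"

context cg begin

lemma pm_unique_edge: "perfect_matching V E M \<Longrightarrow> e1 \<in> M \<Longrightarrow> e2 \<in> M \<Longrightarrow> v \<in> e1 \<Longrightarrow> v \<in> e2 \<Longrightarrow> e1 = e2"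
  using matching_unique_edge unfolding perfect_matching_def by blast

lemma matching_E: "matching E M \<Longrightarrow> e \<in> M \<Longrightarrow> e \<in> E"
  unfolding matching_def by auto

lemma matching_mono: "matching E M \<Longrightarrow> M' \<subseteq> M \<Longrightarrow> matching E M'"
  unfolding matching_def by (meson subsetD subset_trans)

lemma swap_km:
  assumes pm: "perfect_matching V E M" and f: "f \<in> E" "f \<notin> M"
  shows "k_matching E (card M - 1) (swap M f)"
proof -
  have m: "matching E M" using pm unfolding perfect_matching_def by simp
  obtain x y where xy: "x \<noteq> y" "x \<in> V" "y \<in> V" "f = {x,y}" using edge[OF f(1)] by blast
  obtain ex where ex: "ex \<in> M" "x \<in> ex" using pm_edge[OF pm xy(2)] by blast
  obtain ey where ey: "ey \<in> M" "y \<in> ey" using pm_edge[OF pm xy(3)] by blast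
  have "ex \<noteq> ey"
  proof
    assume "ex = ey"
    then have "x \<in> ex" "y \<in> ex" using ex ey by auto
    moreover obtain a b where "a \<noteq> b" "ex = {a,b}" using edge matching_E[OF m ex(1)] by blast
    ultimately have "ex = f" using xy by auto
    thus False using ex f by auto
  qed
  let ?A = "{e\<in>M. e \<inter> f = {}}"
  have B: "{e\<in>M. e \<inter> f \<noteq> {}} = {ex, ey}"
  proof
    show "{e\<in>M. e \<inter> f \<noteq> {}} \<subseteq> {ex, ey}"
    proof
      fix e assume "e \<in> {e\<in>M. e \<inter> f \<noteq> {}}"
      hence e: "e \<in> M" "x \<in> e \<or> y \<in> e" using xy by auto
      thus "e \<in> {ex,ey}" using matching_unique_edge[OF m] ex ey by blast
    qed
    show "{ex, ey} \<subseteq> {e\<in>M. e \<inter> f \<noteq> {}}" using ex ey xy by auto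
  qed
  have finM: "finite M" using matching_fin m by simp
  have "M = ?A \<union> {e\<in>M. e \<inter> f \<noteq> {}}" by auto
  hence "card M = card ?A + card {e\<in>M. e \<inter> f \<noteq> {}}"
    using finM by (metis (no_types, lifting) card_Un_disjoint disjoint_iff finite_Un mem_Collect_eq)
  hence cM: "card M = card ?A + 2" using B \<open>ex \<noteq> ey\<close> by simp
  have "card (swap M f) = card ?A + 1" unfolding swap_def using f finM by simp
  hence "card (swap M f) = card M - 1" using cM by simp
  moreover have "matching E (swap M f)"
    using m f unfolding matching_def swap_def by auto
  ultimately show ?thesis unfolding k_matching_def by simp
qed

lemma scheme:
  assumes pm: "perfect_matching V E M" "card M = n"
    and f: "f \<in> E" "f \<notin> M" "f' \<in> E" "f' \<notin> M"
    and disj: "\<forall>e\<in>M. e \<inter> f = {} \<or> e \<inter> f' = {}"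
    and X: "k_matching E (n-1) X" and Y: "k_matching E (n-1) Y"
    and cov: "E \<subseteq> M \<union> X \<union> Y \<union> {f,f'}"
  shows "cover4 E (n-1)"
  unfolding cover4_def
proof (intro exI conjI)
  show "k_matching E (n-1) (swap M f)" using swap_km[OF pm(1) f(1,2)] pm(2) by simp
  show "k_matching E (n-1) (swap M f')" using swap_km[OF pm(1) f(3,4)] pm(2) by simp
  show "k_matching E (n-1) X" by (rule X)
  show "k_matching E (n-1) Y" by (rule Y)
  have "swap M f \<subseteq> E" "swap M f' \<subseteq> E" "X \<subseteq> E" "Y \<subseteq> E"
    using pm f X Y unfolding swap_def k_matching_def matching_def perfect_matching_def by auto
  moreover have "M \<subseteq> swap M f \<union> swap M f'" using disj unfolding swap_def by auto
  moreover have "f \<in> swap M f" "f' \<in> swap M f'" unfolding swap_def by auto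
  ultimately show "swap M f \<union> swap M f' \<union> X \<union> Y = E" using cov by blast
qed

lemma inj_count:
  assumes m: "matching E Q" and T: "finite T" and h: "\<forall>g\<in>Q. g \<inter> T \<noteq> {}"
  shows "card Q \<le> card T"
proof -
  define c where "c g = (SOME t. t \<in> g \<inter> T)" for g
  have c: "c g \<in> g \<inter> T" if "g \<in> Q" for g
    using h that unfolding c_def by (metis (no_types, lifting) ex_in_conv someI_ex)
  have "inj_on c Q"
  proof (rule inj_onI)
    fix g1 g2 assume "g1 \<in> Q" "g2 \<in> Q" "c g1 = c g2"
    thus "g1 = g2" using c matching_unique_edge[OF m] by (metis IntD1)
  qed
  moreover have "c ` Q \<subseteq> T" using c by auto
  ultimately show ?thesis using card_inj_on_le T by blast
qed

end

context cg begin

lemma case1: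
  assumes pmM: "perfect_matching V E M" and pmP0: "perfect_matching V (E - M) P"
    and cV: "card V = 2*n" and n4: "n \<ge> 4"
  shows "cover4 E (n-1)"
proof -
  have mM: "matching E M" using pmM unfolding perfect_matching_def by simp
  have PEM: "P \<subseteq> E - M" using pmP0 unfolding perfect_matching_def matching_def by simp
  have pmP: "perfect_matching V E P" using pmP0 PEM unfolding perfect_matching_def matching_def by auto
  have mP: "matching E P" using pmP unfolding perfect_matching_def by simp
  define Q where "Q = E - M - P"
  have QE: "Q \<subseteq> E" unfolding Q_def by auto
  have mQ: "matching E Q" unfolding matching_def
  proof (intro conjI ballI impI)
    show "Q \<subseteq> E" by (rule QE)
    fix g1 g2 assume g: "g1 \<in> Q" "g2 \<in> Q" "g1 \<noteq> g2"
    show "g1 \<inter> g2 = {}"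
    proof (rule ccontr)
      assume "g1 \<inter> g2 \<noteq> {}"
      then obtain v where v: "v \<in> g1" "v \<in> g2" by blast
      have vV: "v \<in> V" using v g QE edge_sub by blast
      obtain em where em: "em \<in> M" "v \<in> em" using pm_edge[OF pmM vV] by blast
      obtain ep where ep: "ep \<in> P" "v \<in> ep" using pm_edge[OF pmP vV] by blast
      have "em \<noteq> ep" using em ep PEM by blast
      moreover have "em \<in> E" "ep \<in> E" using em ep PEM matching_E[OF mM] by auto
      moreover have "g1 \<noteq> em" "g2 \<noteq> em" "g1 \<noteq> ep" "g2 \<noteq> ep" using g em ep unfolding Q_def by auto
      ultimately show False using no4[OF vV, of em ep g1 g2] g QE v em ep by auto
    qed
  qed
  have pmQ: "perfect_matching V E Q" unfolding perfect_matching_def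
  proof (intro conjI)
    show "matching E Q" by (rule mQ)
    show "\<Union>Q = V"
    proof
      show "\<Union>Q \<subseteq> V" using QE edge_sub by blast
      show "V \<subseteq> \<Union>Q"
      proof
        fix v assume vV: "v \<in> V"
        obtain em where em: "em \<in> M" "v \<in> em" using pm_edge[OF pmM vV] by blast
        obtain ep where ep: "ep \<in> P" "v \<in> ep" using pm_edge[OF pmP vV] by blast
        have E2: "em \<in> E" "ep \<in> E" using em ep PEM matching_E[OF mM] by auto
        obtain e3 where e3: "e3 \<in> E" "v \<in> e3" "e3 \<noteq> em" "e3 \<noteq> ep"
          using exists3[OF vV E2 em(2) ep(2)] by blast
        have "e3 \<notin> M" using e3 em matching_unique_edge[OF mM] by blast
        moreover have "e3 \<notin> P" using e3 ep matching_unique_edge[OF mP] by blast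
        ultimately have "e3 \<in> Q" unfolding Q_def using e3 by auto
        thus "v \<in> \<Union>Q" using e3 by blast
      qed
    qed
  qed
  have cM: "card M = n" using pm_card[OF pmM] cV by simp
  have cP: "card P = n" using pm_card[OF pmP] cV by simp
  have cQ: "card Q = n" using pm_card[OF pmQ] cV by simp
  have finP: "finite P" using matching_fin[OF mP] .
  have "P \<noteq> {}" using cP n4 by auto
  then obtain f where fP: "f \<in> P" by blast
  have fE: "f \<in> E" and fM: "f \<notin> M" using fP PEM by auto
  obtain x y where xy: "x \<noteq> y" "x \<in> V" "y \<in> V" "f = {x,y}" using edge[OF fE] by blast
  obtain ex where ex: "ex \<in> M" "x \<in> ex" using pm_edge[OF pmM xy(2)] by blast
  obtain ey where ey: "ey \<in> M" "y \<in> ey" using pm_edge[OF pmM xy(3)] by blast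
  have exE: "ex \<in> E" and eyE: "ey \<in> E" using ex ey matching_E[OF mM] by auto
  have Mf: "\<And>e. e \<in> M \<Longrightarrow> e \<inter> f \<noteq> {} \<Longrightarrow> e = ex \<or> e = ey"
    using xy ex ey matching_unique_edge[OF mM] by blast
  have "ex \<noteq> ey"
  proof
    assume "ex = ey"
    then have "x \<in> ex" "y \<in> ex" using ex ey by auto
    moreover obtain a b where "a \<noteq> b" "ex = {a,b}" using edge exE by blast
    ultimately have "ex = f" using xy by auto
    thus False using ex fM by auto
  qed
  hence exy: "ex \<inter> ey = {}" using ex ey mM unfolding matching_def by blast
  define S where "S = ex \<union> ey"
  have finS: "finite S" unfolding S_def using exE eyE edge by fastforce
  have cS: "card S = 4" unfolding S_def using exy card_edge[OF exE] card_edge[OF eyE]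
    by (metis card_Un_disjoint exE eyE edge finite.emptyI finite.insertI numeral_Bit0 numeral_plus_numeral numeral_One one_plus_numeral semiring_norm(5) add_2_eq_Suc' numeral_2_eq_2 one_add_one) 
  have covE: "E \<subseteq> M \<union> P \<union> Q" unfolding Q_def by auto
  show ?thesis
  proof (cases "\<exists>g\<in>Q. g \<inter> S = {}")
    case True
    then obtain g where g: "g \<in> Q" "g \<inter> S = {}" by blast
    show ?thesis
    proof (rule scheme[OF pmM cM fE fM, of g "P - {f}" "Q - {g}"])
      show "g \<in> E" "g \<notin> M" using g unfolding Q_def by auto
      show "\<forall>e\<in>M. e \<inter> f = {} \<or> e \<inter> g = {}"
        using Mf g unfolding S_def by blast
      show "k_matching E (n - 1) (P - {f})" unfolding k_matching_def
        using matching_mono[OF mP] cP fP finP by auto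
      show "k_matching E (n - 1) (Q - {g})" unfolding k_matching_def
        using matching_mono[OF mQ] cQ g matching_fin[OF mQ] by auto
      show "E \<subseteq> M \<union> (P - {f}) \<union> (Q - {g}) \<union> {f, g}" using covE by blast
    qed
  next
    case False
    hence allS: "\<forall>g\<in>Q. g \<inter> S \<noteq> {}" by blast
    have noboth: "\<forall>g\<in>Q. g \<inter> ex = {} \<or> g \<inter> ey = {}"
    proof (rule ccontr)
      assume "\<not> ?thesis"
      then obtain g0 where g0: "g0 \<in> Q" "g0 \<inter> ex \<noteq> {}" "g0 \<inter> ey \<noteq> {}" by blast
      then obtain a b where ab: "a \<in> g0" "a \<in> ex" "b \<in> g0" "b \<in> ey" by blast
      have "a \<noteq> b" using ab exy by blast
      moreover obtain c d where "c \<noteq> d" "g0 = {c,d}" using edge g0 QE by blast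
      ultimately have g0ab: "g0 = {a,b}" using ab by auto
      have g0S: "g0 \<subseteq> S" unfolding S_def using g0ab ab by auto
      have "\<forall>g\<in>Q - {g0}. g \<inter> (S - g0) \<noteq> {}"
      proof
        fix g assume g: "g \<in> Q - {g0}"
        hence "g \<inter> g0 = {}" using mQ g0 unfolding matching_def by blast
        thus "g \<inter> (S - g0) \<noteq> {}" using allS g by blast
      qed
      hence "card (Q - {g0}) \<le> card (S - g0)"
        using inj_count[OF matching_mono[OF mQ], of "Q - {g0}" "S - g0"] finS by auto
      moreover have "card (S - g0) = 2" using cS g0S card_edge g0 QE
        by (simp add: card_Diff_subset finS finite_subset subset_iff)
      moreover have "card (Q - {g0}) = n - 1" using cQ g0 matching_fin[OF mQ] by simp
      ultimately show False using n4 by simp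
    qed
    show ?thesis unfolding cover4_def
    proof (intro exI conjI)
      show "k_matching E (n-1) (swap M f)" using swap_km[OF pmM fE fM] cM by simp
      show "k_matching E (n - 1) (P - {f})" unfolding k_matching_def
        using matching_mono[OF mP] cP fP finP by auto
      have exQ: "ex \<notin> Q" "ey \<notin> Q" using ex ey unfolding Q_def by auto
      show "k_matching E (n-1) (swap Q ex)" using swap_km[OF pmQ exE exQ(1)] cQ by simp
      show "k_matching E (n-1) (swap Q ey)" using swap_km[OF pmQ eyE exQ(2)] cQ by simp
      have "swap M f \<subseteq> E" "swap Q ex \<subseteq> E" "swap Q ey \<subseteq> E"
        using mM mQ fE exE eyE unfolding swap_def matching_def by auto
      moreover have "M \<subseteq> swap M f \<union> swap Q ex \<union> swap Q ey"
        using Mf unfolding swap_def by auto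
      moreover have "Q \<subseteq> swap Q ex \<union> swap Q ey" using noboth unfolding swap_def by auto
      moreover have "P \<subseteq> swap M f \<union> (P - {f})" unfolding swap_def by auto
      ultimately show "swap M f \<union> (P - {f}) \<union> swap Q ex \<union> swap Q ey = E"
        using covE PEM by blast
    qed
  qed
qed

end

context cg begin

lemma dbl_eq: "{v,t} = {v,a} \<Longrightarrow> {v,a} \<in> E \<Longrightarrow> t = a"
  using edge_ne by (auto simp: doubleton_eq_iff)

lemma three_nbrs:
  assumes v: "v \<in> V" and a: "{v,a} \<in> E"
  shows "\<exists>b c. {v,b} \<in> E \<and> {v,c} \<in> E \<and> a \<noteq> b \<and> a \<noteq> c \<and> b \<noteq> c \<and>
               (\<forall>t. {v,t} \<in> E \<longrightarrow> t = a \<or> t = b \<or> t = c)"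
proof -
  obtain e2 where e2: "e2 \<in> E" "v \<in> e2" "e2 \<noteq> {v,a}" using exists3[OF v a a] by auto
  obtain b where b: "e2 = {v,b}" using edge_at[OF e2(1,2)] by blast
  have bE: "{v,b} \<in> E" using e2 b by simp
  obtain e3 where e3: "e3 \<in> E" "v \<in> e3" "e3 \<noteq> {v,a}" "e3 \<noteq> {v,b}"
    using exists3[OF v a bE] by auto
  obtain c where c: "e3 = {v,c}" using edge_at[OF e3(1,2)] by blast
  have cE: "{v,c} \<in> E" using e3 c by simp
  have ab: "a \<noteq> b" using e2 b by auto
  have ac: "a \<noteq> c" "b \<noteq> c" using e3 c by auto
  have "\<forall>t. {v,t} \<in> E \<longrightarrow> t = a \<or> t = b \<or> t = c"
  proof (intro allI impI)
    fix t assume t: "{v,t} \<in> E"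
    have "{v,t} = {v,a} \<or> {v,t} = {v,b} \<or> {v,t} = {v,c}"
      by (rule all3[OF v a bE cE]) (use e2 e3 b c t in auto)
    thus "t = a \<or> t = b \<or> t = c" using dbl_eq a bE cE by blast
  qed
  thus ?thesis using bE cE ab ac by blast
qed

lemma nbrs3:
  assumes v: "v \<in> V" and E3: "{v,a} \<in> E" "{v,b} \<in> E" "{v,c} \<in> E"
    and d: "a \<noteq> b" "a \<noteq> c" "b \<noteq> c" and t: "{v,t} \<in> E"
  shows "t \<in> {a,b,c}"
proof -
  have "{v,t} = {v,a} \<or> {v,t} = {v,b} \<or> {v,t} = {v,c}"
    by (rule all3[OF v E3 _ _ _ _ _ _ t]) (use d in \<open>auto simp: doubleton_eq_iff\<close>)
  thus ?thesis using dbl_eq E3 by blast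
qed

lemma closed_all:
  assumes conn: "connected_graph V E" and x: "x \<in> V" "x \<in> K"
    and cl: "\<forall>a b. {a,b} \<in> E \<longrightarrow> a \<in> K \<longrightarrow> b \<in> K"
  shows "V \<subseteq> K"
proof
  fix v assume v: "v \<in> V"
  have "(adjacent E)\<^sup>*\<^sup>* x v" using conn x v unfolding connected_graph_def by blast
  thus "v \<in> K"
  proof (induction rule: rtranclp_induct)
    case base thus ?case using x by simp
  next
    case (step y z) thus ?case using cl unfolding adjacent_def by blast
  qed
qed

end

context cg begin

lemma case2:
  assumes conn: "connected_graph V E"
    and pmM: "perfect_matching V E M" and mN: "matching E N" and cN: "card N = n - 1"
    and MN: "M \<inter> N = {}" and cV: "card V = 2*n" and n4: "n \<ge> 4"
    and noPM: "\<not> (\<exists>P. perfect_matching V (E - M) P)"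
  shows "cover4 E (n-1)"
proof -
  have mM: "matching E M" using pmM unfolding perfect_matching_def by simp
  have NE: "N \<subseteq> E" and ME: "M \<subseteq> E" using mN mM unfolding matching_def by auto
  have cM: "card M = n" using pm_card[OF pmM] cV by simp
  have cE: "card E = 3*n" using handshake cV by simp
  have finN: "finite N" and finM: "finite M" using matching_fin mN mM by auto
  have UN: "\<Union>N \<subseteq> V" using NE edge_sub by blast
  have cUN: "card (\<Union>N) = 2*(n-1)" using card_Union_matching[OF mN] cN by simp
  have "card (V - \<Union>N) = 2" using card_Diff_subset[OF finite_subset[OF UN finV] UN] cUN cV n4 by simp
  then obtain u w where uw: "u \<noteq> w" "V - \<Union>N = {u,w}" by (auto simp: card_2_iff)
  have uV: "u \<in> V" "w \<in> V" and uNN: "u \<notin> \<Union>N" "w \<notin> \<Union>N" using uw by auto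
  have VU: "V = \<Union>N \<union> {u,w}" using uw UN by blast
  have cov: "\<And>v. v \<in> V \<Longrightarrow> v \<noteq> u \<Longrightarrow> v \<noteq> w \<Longrightarrow> v \<in> \<Union>N" using uw by blast
  have Nu: "\<And>t. {u,t} \<notin> N" "\<And>t. {w,t} \<notin> N" using uNN by auto
  have inN: "\<And>x y. {x,y} \<in> N \<Longrightarrow> x \<in> \<Union>N \<and> y \<in> \<Union>N" by auto
  have "\<forall>v\<in>V. \<exists>t. {v,t} \<in> M"
  proof
    fix v assume "v \<in> V"
    then obtain e where "e \<in> M" "v \<in> e" using pm_edge[OF pmM] by blast
    thus "\<exists>t. {v,t} \<in> M" using edge_at ME by blast
  qed
  then obtain m where m: "\<And>v. v \<in> V \<Longrightarrow> {v, m v} \<in> M" by metis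
  have mU: "\<And>v t. v \<in> V \<Longrightarrow> {v,t} \<in> M \<Longrightarrow> t = m v"
    using matching_unique[OF mM] m by blast
  have mE: "\<And>v. v \<in> V \<Longrightarrow> {v, m v} \<in> E" using m ME by blast
  have mV: "\<And>v. v \<in> V \<Longrightarrow> m v \<in> V" using mE edge_V by blast
  have minv: "\<And>v. v \<in> V \<Longrightarrow> m (m v) = v"
  proof -
    fix v assume v: "v \<in> V"
    have "{m v, v} \<in> M" using m[OF v] by (simp add: insert_commute)
    thus "m (m v) = v" using mU[OF mV[OF v]] by simp
  qed
  have "\<forall>v\<in>\<Union>N. \<exists>t. {v,t} \<in> N"
  proof
    fix v assume "v \<in> \<Union>N"
    then obtain e where "e \<in> N" "v \<in> e" by blast
    thus "\<exists>t. {v,t} \<in> N" using edge_at NE by blast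
  qed
  then obtain nu where nu: "\<And>v. v \<in> \<Union>N \<Longrightarrow> {v, nu v} \<in> N" by metis
  have nU: "\<And>v t s. {v,t} \<in> N \<Longrightarrow> {v,s} \<in> N \<Longrightarrow> t = s"
    using matching_unique[OF mN] by blast
  have MNe: "\<And>e. e \<in> M \<Longrightarrow> e \<notin> N" using MN by blast
  define R where "R = E - M - N"
  have RE: "R \<subseteq> E" unfolding R_def by auto
  have Runiq: "\<And>v x y. v \<in> \<Union>N \<Longrightarrow> {v,x} \<in> R \<Longrightarrow> {v,y} \<in> R \<Longrightarrow> x = y"
  proof -
    fix v x y assume a: "v \<in> \<Union>N" "{v,x} \<in> R" "{v,y} \<in> R"
    have vV: "v \<in> V" using UN a by auto
    obtain b c where bc: "{v,b} \<in> E" "{v,c} \<in> E" "m v \<noteq> b" "m v \<noteq> c" "b \<noteq> c"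
      "\<forall>t. {v,t} \<in> E \<longrightarrow> t = m v \<or> t = b \<or> t = c"
      using three_nbrs[OF vV mE[OF vV]] by blast
    have nuE: "{v, nu v} \<in> E" using nu[OF a(1)] NE by blast
    have "nu v \<noteq> m v" using nu[OF a(1)] m[OF vV] MNe by metis
    moreover have "x \<noteq> m v" "y \<noteq> m v" using a m[OF vV] unfolding R_def by auto
    moreover have "x \<noteq> nu v" "y \<noteq> nu v" using a nu[OF a(1)] unfolding R_def by auto
    moreover have "x \<in> {m v, b, c}" "y \<in> {m v, b, c}" "nu v \<in> {m v, b, c}"
      using bc(6) a nuE unfolding R_def by auto
    ultimately show "x = y" using bc(5) by auto
  qed
  obtain u1 u2 where U: "{u,u1} \<in> E" "{u,u2} \<in> E" "m u \<noteq> u1" "m u \<noteq> u2" "u1 \<noteq> u2"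
      "\<forall>t. {u,t} \<in> E \<longrightarrow> t = m u \<or> t = u1 \<or> t = u2"
    using three_nbrs[OF uV(1) mE[OF uV(1)]] by blast
  obtain w1 w2 where W: "{w,w1} \<in> E" "{w,w2} \<in> E" "m w \<noteq> w1" "m w \<noteq> w2" "w1 \<noteq> w2"
      "\<forall>t. {w,t} \<in> E \<longrightarrow> t = m w \<or> t = w1 \<or> t = w2"
    using three_nbrs[OF uV(2) mE[OF uV(2)]] by blast
  have notM: "\<And>v t. v \<in> V \<Longrightarrow> t \<noteq> m v \<Longrightarrow> {v,t} \<notin> M" using mU by blast
  have UR: "{u,u1} \<in> R" "{u,u2} \<in> R" using U notM[OF uV(1)] Nu unfolding R_def by auto
  have WR: "{w,w1} \<in> R" "{w,w2} \<in> R" using W notM[OF uV(2)] Nu unfolding R_def by auto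
  have Ru: "t = u1 \<or> t = u2" if "{u,t} \<in> R" for t
  proof -
    have "{u,t} \<in> E" "{u,t} \<notin> M" using that unfolding R_def by auto
    moreover hence "t \<noteq> m u" using m[OF uV(1)] by auto
    ultimately show ?thesis using U(6) by auto
  qed
  have Rw: "t = w1 \<or> t = w2" if "{w,t} \<in> R" for t
  proof -
    have "{w,t} \<in> E" "{w,t} \<notin> M" using that unfolding R_def by auto
    moreover hence "t \<noteq> m w" using m[OF uV(2)] by auto
    ultimately show ?thesis using W(6) by auto
  qed
  have NEM: "N \<subseteq> E - M" using NE MN by blast
  have REM: "R \<subseteq> E - M" unfolding R_def by blast
  have nouw: "{u,w} \<notin> E - M"
  proof
    assume uwE: "{u,w} \<in> E - M"
    have s1: "N \<union> {{u,w}} \<subseteq> E - M" by (rule Un_least[OF NEM]) (use uwE in simp)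
    have s3: "\<Union>(N \<union> {{u,w}}) = V"
    proof -
      have "\<Union>(N \<union> {{u,w}}) = \<Union>N \<union> {u,w}" by simp
      thus ?thesis by (rule trans) (rule VU[symmetric])
    qed
    have s2: "\<forall>e1\<in>N \<union> {{u,w}}. \<forall>e2\<in>N \<union> {{u,w}}. e1 \<noteq> e2 \<longrightarrow> e1 \<inter> e2 = {}"
    proof (intro ballI impI)
      fix e1 e2 assume e: "e1 \<in> N \<union> {{u,w}}" "e2 \<in> N \<union> {{u,w}}" "e1 \<noteq> e2"
      show "e1 \<inter> e2 = {}"
      proof (cases "e1 \<in> N \<and> e2 \<in> N")
        case True thus ?thesis using mN e(3) unfolding matching_def by simp
      next
        case False
        have "e1 \<in> N \<or> e1 = {u,w}" "e2 \<in> N \<or> e2 = {u,w}" using e(1,2) by auto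
        hence "e1 = {u,w} \<and> e2 \<in> N \<or> e2 = {u,w} \<and> e1 \<in> N" using e(3) False by auto
        thus ?thesis using uNN by auto
      qed
    qed
    have "perfect_matching V (E - M) (N \<union> {{u,w}})" unfolding perfect_matching_def matching_def
      by (rule conjI[OF conjI[OF s1 s2] s3])
    thus False using noPM by blast
  qed
  have noshort: "\<And>x y. {u,x} \<in> R \<Longrightarrow> {w,y} \<in> R \<Longrightarrow> {x,y} \<notin> N"
  proof
    fix x y assume a: "{u,x} \<in> R" "{w,y} \<in> R" "{x,y} \<in> N"
    have xy: "x \<in> \<Union>N" "y \<in> \<Union>N" using a(3) by auto
    have xne: "x \<noteq> y" using a(3) NE edge_ne by blast
    define P where "P = (N - {{x,y}}) \<union> {{u,x},{w,y}}"
    have "perfect_matching V (E - M) P" unfolding perfect_matching_def matching_def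
    proof (intro conjI ballI impI)
      show "P \<subseteq> E - M" unfolding P_def using NEM REM a by blast
      show "\<Union>P = V"
      proof
        show "\<Union>P \<subseteq> V" unfolding P_def using UN uV xy by auto
        show "V \<subseteq> \<Union>P"
        proof
          fix v assume v: "v \<in> V"
          show "v \<in> \<Union>P"
          proof (cases "v = u \<or> v = w \<or> v = x \<or> v = y")
            case True thus ?thesis unfolding P_def by auto
          next
            case False
            hence "v \<in> \<Union>N" using cov v by blast
            then obtain g where g: "g \<in> N" "v \<in> g" by blast
            have "g \<noteq> {x,y}" using g False by auto
            thus ?thesis unfolding P_def using g by blast
          qed
        qed
      qed
      fix e1 e2 assume e: "e1 \<in> P" "e2 \<in> P" "e1 \<noteq> e2"
      have side: "g \<inter> {u,x} = {} \<and> g \<inter> {w,y} = {}" if g: "g \<in> N - {{x,y}}" for g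
      proof -
        have "x \<notin> g" using g a(3) matching_unique_edge[OF mN, of g "{x,y}" x] by auto
        moreover have "y \<notin> g" using g a(3) matching_unique_edge[OF mN, of g "{x,y}" y] by auto
        moreover have "u \<notin> g" "w \<notin> g" using g uNN by auto
        ultimately show ?thesis by auto
      qed
      have uxwy: "{u,x} \<inter> {w,y} = {}" using uw xy uNN xne by auto
      show "e1 \<inter> e2 = {}"
      proof (cases "e1 \<in> N - {{x,y}} \<and> e2 \<in> N - {{x,y}}")
        case True thus ?thesis using mN e(3) unfolding matching_def by simp
      next
        case False
        have e12: "e1 \<in> N - {{x,y}} \<or> e1 = {u,x} \<or> e1 = {w,y}" "e2 \<in> N - {{x,y}} \<or> e2 = {u,x} \<or> e2 = {w,y}"
          using e(1,2) unfolding P_def by auto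
        show ?thesis
        proof (cases "e1 \<in> N - {{x,y}}")
          case True
          hence "e2 \<notin> N - {{x,y}}" using False by auto
          hence "e2 = {u,x} \<or> e2 = {w,y}" using e12(2) by auto
          moreover have "e1 \<inter> {u,x} = {}" "e1 \<inter> {w,y} = {}" using side[OF True] by simp_all
          ultimately show "e1 \<inter> e2 = {}" by (elim disjE) simp_all
        next
          case F1: False
          hence e1: "e1 = {u,x} \<or> e1 = {w,y}" using e12(1) by auto
          show ?thesis
          proof (cases "e2 \<in> N - {{x,y}}")
            case True
            have "e2 \<inter> {u,x} = {}" "e2 \<inter> {w,y} = {}" using side[OF True] by simp_all
            thus "e1 \<inter> e2 = {}" using e1 by (elim disjE) (simp_all add: Int_commute)
          next
            case False
            hence "e2 = {u,x} \<or> e2 = {w,y}" using e12(2) by auto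
            thus "e1 \<inter> e2 = {}" using e1 e(3) uxwy by (elim disjE) (simp_all add: Int_commute)
          qed
        qed
      qed
    qed
    thus False using noPM by blast
  qed
  have UREM: "{u,u1} \<in> E - M" "{u,u2} \<in> E - M" "{w,w1} \<in> E - M" "{w,w2} \<in> E - M"
    using UR WR REM by auto
  have uiw: "u1 \<noteq> w" "u2 \<noteq> w" using UREM(1,2) nouw by auto
  have wiu: "w1 \<noteq> u" "w2 \<noteq> u" using UREM(3,4) nouw by (auto simp: insert_commute)
  have uiV: "u1 \<in> V" "u2 \<in> V" "w1 \<in> V" "w2 \<in> V" using U(1,2) W(1,2) edge_V by auto
  have uiu: "u1 \<noteq> u" "u2 \<noteq> u" "w1 \<noteq> w" "w2 \<noteq> w" using U(1,2) W(1,2) edge_ne by fastforce+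
  have uiN: "u1 \<in> \<Union>N" "u2 \<in> \<Union>N" "w1 \<in> \<Union>N" "w2 \<in> \<Union>N"
    using cov uiV uiw wiu uiu uw(1) by metis+
  define a1 where "a1 = nu u1"
  define a2 where "a2 = nu u2"
  define b1 where "b1 = nu w1"
  define b2 where "b2 = nu w2"
  have Na: "{u1,a1} \<in> N" "{u2,a2} \<in> N" "{w1,b1} \<in> N" "{w2,b2} \<in> N"
    unfolding a1_def a2_def b1_def b2_def using nu uiN by auto
  have aN: "a1 \<in> \<Union>N" "a2 \<in> \<Union>N" "b1 \<in> \<Union>N" "b2 \<in> \<Union>N" using Na by auto
  have aV: "a1 \<in> V" "a2 \<in> V" "b1 \<in> V" "b2 \<in> V" using aN UN by auto
  have a_uw: "a1 \<noteq> u" "a2 \<noteq> u" "b1 \<noteq> u" "b2 \<noteq> u" "a1 \<noteq> w" "a2 \<noteq> w" "b1 \<noteq> w" "b2 \<noteq> w"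
    using aN uNN by auto
  have a_self: "a1 \<noteq> u1" "a2 \<noteq> u2" "b1 \<noteq> w1" "b2 \<noteq> w2" using Na NE edge_ne by blast+
  have cross_uw: False if "{u,x} \<in> R" "{w,x} \<in> R" "x \<in> \<Union>N" for x
  proof -
    have "{x,u} \<in> R" "{x,w} \<in> R" using that by (simp_all add: insert_commute)
    thus False using Runiq[OF that(3)] uw(1) by blast
  qed
  have uw_j: "u1 \<noteq> w1" "u1 \<noteq> w2" "u2 \<noteq> w1" "u2 \<noteq> w2"
    using cross_uw UR WR uiN by metis+
  have aw: "a1 \<noteq> w1" "a1 \<noteq> w2" "a2 \<noteq> w1" "a2 \<noteq> w2"
    using noshort UR WR Na by metis+
  have ub: "u1 \<noteq> b1" "u1 \<noteq> b2" "u2 \<noteq> b1" "u2 \<noteq> b2"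
  proof -
    have "{u1,w1} \<notin> N" "{u1,w2} \<notin> N" "{u2,w1} \<notin> N" "{u2,w2} \<notin> N"
      using noshort UR WR by auto
    thus "u1 \<noteq> b1" "u1 \<noteq> b2" "u2 \<noteq> b1" "u2 \<noteq> b2" using Na by (auto simp: insert_commute)
  qed
  have ab: "a1 \<noteq> b1" "a1 \<noteq> b2" "a2 \<noteq> b1" "a2 \<noteq> b2"
  proof -
    have "{a1,u1} \<in> N" "{a2,u2} \<in> N" "{b1,w1} \<in> N" "{b2,w2} \<in> N" using Na by (simp_all add: insert_commute)
    thus "a1 \<noteq> b1" "a1 \<noteq> b2" "a2 \<noteq> b1" "a2 \<noteq> b2" using nU uw_j by metis+
  qed
  have a12: "a1 \<noteq> a2" "b1 \<noteq> b2"
  proof -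
    have "{a1,u1} \<in> N" "{a2,u2} \<in> N" "{b1,w1} \<in> N" "{b2,w2} \<in> N" using Na by (simp_all add: insert_commute)
    thus "a1 \<noteq> a2" "b1 \<noteq> b2" using nU U(5) W(5) by metis+
  qed
  have Ta: "a1 = u2 \<longleftrightarrow> a2 = u1"
  proof
    assume "a1 = u2" hence "{u2,u1} \<in> N" using Na(1) by (simp add: insert_commute)
    thus "a2 = u1" using nU Na(2) by metis
  next
    assume "a2 = u1" hence "{u1,u2} \<in> N" using Na(2) by (simp add: insert_commute)
    thus "a1 = u2" using nU Na(1) by metis
  qed
  have Tb: "b1 = w2 \<longleftrightarrow> b2 = w1"
  proof
    assume "b1 = w2" hence "{w2,w1} \<in> N" using Na(3) by (simp add: insert_commute)
    thus "b2 = w1" using nU Na(4) by metis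
  next
    assume "b2 = w1" hence "{w1,w2} \<in> N" using Na(4) by (simp add: insert_commute)
    thus "b1 = w2" using nU Na(3) by metis
  qed
  have cMN: "card (M \<union> N) = 2*n - 1" using card_Un_disjoint[OF finM finN MN] cM cN n4 by simp
  have cR: "card R = n + 1"
  proof -
    have "R = E - (M \<union> N)" unfolding R_def by auto
    hence "card R = card E - card (M \<union> N)" using card_Diff_subset[OF finite_subset[OF _ finE]] ME NE
      by (metis Un_subset_iff order_refl)
    thus ?thesis using cE cMN n4 by simp
  qed
  have finR: "finite R" using finE RE finite_subset by auto
  have sch: "cover4 E (n-1)"
    if h: "{u,u'} \<in> R" "{u',a'} \<in> N" "{w,w'} \<in> R" "{w',b'} \<in> N" "u' \<in> {u1,u2}" "w' \<in> {w1,w2}"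
        "{u,u'} \<inter> {w,w'} = {}" "f \<in> {{u,u'},{u',a'}}" "f' \<in> {{w,w'},{w',b'}}" "f \<inter> f' = {}"
        "\<forall>e\<in>M. e \<inter> f = {} \<or> e \<inter> f' = {}"
     for u' a' w' b' f f'
  proof -
    define X where "X = (N \<union> {{u,u'},{w,w'}}) - {f,f'}"
    define Y where "Y = R - {{u,u'},{w,w'}}"
    have e1N: "{u,u'} \<notin> N" "{w,w'} \<notin> N" using Nu by auto
    have e12: "{u,u'} \<noteq> {w,w'}" using h(7) by auto
    have fne: "f \<noteq> {}" using h(8) by auto
    have ff': "f \<noteq> f'" using h(10) fne by auto
    have cA: "card (N \<union> {{u,u'},{w,w'}}) = n + 1"
    proof -
      have "N \<union> {{u,u'},{w,w'}} = insert {u,u'} (insert {w,w'} N)" by auto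
      thus ?thesis using cN e1N e12 finN n4 by (simp add: card_insert_if)
    qed
    have fA: "{f,f'} \<subseteq> N \<union> {{u,u'},{w,w'}}" using h(2,4,8,9) by auto
    have cX: "card X = n - 1"
    proof -
      have "card X = card (N \<union> {{u,u'},{w,w'}}) - card {f,f'}"
        unfolding X_def by (rule card_Diff_subset) (use fA in auto)
      thus ?thesis using cA ff' by simp
    qed
    have fE: "f \<in> E" "f \<notin> M" "f' \<in> E" "f' \<notin> M" using h(1-4,8,9) NEM REM by auto
    have sideU: "g \<inter> {u,u'} = {}" if "g \<in> N" "g \<noteq> f" "{u,u'} \<noteq> f" for g
    proof -
      have "f = {u',a'}" using h(8) that(3) by auto
      hence "g \<noteq> {u',a'}" using that(2) by simp
      hence "u' \<notin> g" using matching_unique_edge[OF mN that(1) h(2), of u'] by auto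
      moreover have "u \<notin> g" using that(1) uNN by auto
      ultimately show ?thesis by auto
    qed
    have sideW: "g \<inter> {w,w'} = {}" if "g \<in> N" "g \<noteq> f'" "{w,w'} \<noteq> f'" for g
    proof -
      have "f' = {w',b'}" using h(9) that(3) by auto
      hence "g \<noteq> {w',b'}" using that(2) by simp
      hence "w' \<notin> g" using matching_unique_edge[OF mN that(1) h(4), of w'] by auto
      moreover have "w \<notin> g" using that(1) uNN by auto
      ultimately show ?thesis by auto
    qed
    have mX: "matching E X" unfolding matching_def
    proof (intro conjI ballI impI)
      show "X \<subseteq> E" unfolding X_def using NE h(1,3) RE by auto
      fix g1 g2 assume g: "g1 \<in> X" "g2 \<in> X" "g1 \<noteq> g2"
      have g1c: "g1 \<in> N \<and> g1 \<noteq> f \<and> g1 \<noteq> f' \<or> g1 = {u,u'} \<and> {u,u'} \<noteq> f \<and> {u,u'} \<noteq> f' \<or> g1 = {w,w'} \<and> {w,w'} \<noteq> f \<and> {w,w'} \<noteq> f'"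
        using g(1) unfolding X_def by auto
      have g2c: "g2 \<in> N \<and> g2 \<noteq> f \<and> g2 \<noteq> f' \<or> g2 = {u,u'} \<and> {u,u'} \<noteq> f \<and> {u,u'} \<noteq> f' \<or> g2 = {w,w'} \<and> {w,w'} \<noteq> f \<and> {w,w'} \<noteq> f'"
        using g(2) unfolding X_def by auto
      have NN: "g1 \<inter> g2 = {}" if "g1 \<in> N" "g2 \<in> N" using mN g(3) that unfolding matching_def by simp
      have h7': "{w,w'} \<inter> {u,u'} = {}" using h(7) by (simp add: Int_commute)
      show "g1 \<inter> g2 = {}"
        using g1c g2c NN sideU[of g1] sideU[of g2] sideW[of g1] sideW[of g2] h(7) h7' g(3)
        by (elim disjE conjE) (simp_all add: Int_commute)
    qed
    have cY: "card Y = n - 1"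
    proof -
      have "card Y = card R - card {{u,u'},{w,w'}}"
        unfolding Y_def by (rule card_Diff_subset) (use h(1,3) finR in auto)
      thus ?thesis using cR e12 by simp
    qed
    have mY: "matching E Y" unfolding matching_def
    proof (intro conjI ballI impI)
      show "Y \<subseteq> E" unfolding Y_def using RE by auto
      fix g1 g2 assume g: "g1 \<in> Y" "g2 \<in> Y" "g1 \<noteq> g2"
      show "g1 \<inter> g2 = {}"
      proof (rule ccontr)
        assume "g1 \<inter> g2 \<noteq> {}"
        then obtain v where v: "v \<in> g1" "v \<in> g2" by blast
        have gR: "g1 \<in> R" "g2 \<in> R" "g1 \<noteq> {u,u'}" "g2 \<noteq> {u,u'}" "g1 \<noteq> {w,w'}" "g2 \<noteq> {w,w'}"
          using g(1,2) unfolding Y_def by auto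
        obtain x where x: "g1 = {v,x}" using edge_at[OF _ v(1)] gR RE by blast
        obtain y where y: "g2 = {v,y}" using edge_at[OF _ v(2)] gR RE by blast
        have xy: "x \<noteq> y" using x y g(3) by auto
        have vV: "v \<in> V" using v(1) gR(1) RE edge_sub by blast
        show False
        proof (cases "v = u")
          case True
          have "x = u1 \<or> x = u2" "y = u1 \<or> y = u2" using Ru gR(1,2) x y True by auto
          moreover have "x \<noteq> u'" "y \<noteq> u'" using gR(3,4) x y True by auto
          ultimately show False using xy h(5) by auto
        next
          case nu: False
          show False
          proof (cases "v = w")
            case True
            have "x = w1 \<or> x = w2" "y = w1 \<or> y = w2" using Rw gR(1,2) x y True by auto
            moreover have "x \<noteq> w'" "y \<noteq> w'" using gR(5,6) x y True by auto
            ultimately show False using xy h(6) by auto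
          next
            case False
            hence "v \<in> \<Union>N" using cov vV nu by blast
            thus False using Runiq gR(1,2) x y xy by blast
          qed
        qed
      qed
    qed
    have covE: "E \<subseteq> M \<union> X \<union> Y \<union> {f,f'}" unfolding X_def Y_def R_def by auto
    show ?thesis
      by (rule scheme[OF pmM cM fE h(11)])
         (use mX cX mY cY covE in \<open>simp_all add: k_matching_def\<close>)
  qed
  have minv': "\<And>x. x \<in> {u,u1,u2,a1,a2,w,w1,w2,b1,b2} \<Longrightarrow> m (m x) = x"
    using minv uV uiV aV by auto
  have D: "distinct [u,u1,u2,w,w1,w2]" using uiu uiw wiu uw(1) U(5) W(5) uw_j by auto
  have Da: "a1 \<notin> {u,u1,w,w1,w2,b1,b2}" "a2 \<notin> {u,u2,w,w1,w2,b1,b2}" "a1 \<noteq> a2"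
    using a_uw a_self aw ab a12 by auto
  have Db: "b1 \<notin> {w,w1,u,u1,u2}" "b2 \<notin> {w,w2,u,u1,u2}" "b1 \<noteq> b2"
    using a_uw a_self ub a12 by auto
  have UW: "x \<noteq> y" if "x \<in> {u,u1,u2,a1,a2}" "y \<in> {w,w1,w2,b1,b2}" for x y
    using that uw(1) wiu uiw uw_j a_uw ub aw ab by auto
  have good: "\<exists>p q r s. (p,q) \<in> {(u,u1),(u1,a1),(u,u2),(u2,a2)} \<and>
                     (r,s) \<in> {(w,w1),(w1,b1),(w,w2),(w2,b2)} \<and> m p \<notin> {r,s} \<and> m q \<notin> {r,s}"
  proof (rule ccontr)
    assume ng: "\<not> ?thesis"
    have bad: "m p \<in> {r,s} \<or> m q \<in> {r,s}"
      if "(p,q) \<in> {(u,u1),(u1,a1),(u,u2),(u2,a2)}" "(r,s) \<in> {(w,w1),(w1,b1),(w,w2),(w2,b2)}" for p q r s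
      using ng that by auto
    have C: "a1 = u2 \<and> b1 = w2 \<and> m u \<in> {w,w1,w2} \<and> m u1 \<in> {w,w1,w2} \<and> m u2 \<in> {w,w1,w2}
         \<and> m w \<in> {u,u1,u2} \<and> m w1 \<in> {u,u1,u2} \<and> m w2 \<in> {u,u1,u2}"
      by (rule core[OF minv' D Da Db Ta Tb bad])
    have Ca: "a1 = u2" "b1 = w2" using C by simp_all
    have A2: "a2 = u1" "b2 = w1" using Ca Ta Tb by simp_all
    define K where "K = {u,u1,u2,w,w1,w2}"
    have mK: "m u \<in> K" "m u1 \<in> K" "m u2 \<in> K" "m w \<in> K" "m w1 \<in> K" "m w2 \<in> K"
      using C unfolding K_def by auto
    have NN2: "{u1,u2} \<in> N" "{u2,u1} \<in> N" "{w1,w2} \<in> N" "{w2,w1} \<in> N"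
      using Na Ca A2 by simp_all
    have NE2: "{u1,u2} \<in> E" "{u2,u1} \<in> E" "{w1,w2} \<in> E" "{w2,w1} \<in> E"
      using NN2 NE by auto
    have Uc: "{u1,u} \<in> E" "{u2,u} \<in> E" "{w1,w} \<in> E" "{w2,w} \<in> E"
      using U(1,2) W(1,2) by (simp_all add: insert_commute)
    have mne: "m x \<noteq> y" if "{x,y} \<in> N" "x \<in> V" for x y
    proof
      assume "m x = y"
      hence "{x,y} \<in> M" using m[OF that(2)] by simp
      thus False using that(1) MNe by blast
    qed
    have mne2: "m u1 \<noteq> u" "m u2 \<noteq> u" "m w1 \<noteq> w" "m w2 \<noteq> w"
      using minv uV uiV U(3,4) W(3,4) by metis+
    have mne3: "m u1 \<noteq> u2" "m u2 \<noteq> u1" "m w1 \<noteq> w2" "m w2 \<noteq> w1"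
      using mne[OF NN2(1) uiV(1)] mne[OF NN2(2) uiV(2)] mne[OF NN2(3) uiV(3)] mne[OF NN2(4) uiV(4)] by simp_all
    have d: "u \<noteq> u2" "u \<noteq> u1" "w \<noteq> w2" "w \<noteq> w1" using uiu by auto
    have nb: "t \<in> K" if "x \<in> K" "{x,t} \<in> E" for x t
    proof -
      have "x = u \<or> x = u1 \<or> x = u2 \<or> x = w \<or> x = w1 \<or> x = w2" using that(1) unfolding K_def by simp
      thus ?thesis
      proof (elim disjE)
        assume x: "x = u"
        hence "t = m u \<or> t = u1 \<or> t = u2" using U(6) that(2) by simp
        thus ?thesis using mK(1) unfolding K_def by auto
      next
        assume x: "x = w"
        hence "t = m w \<or> t = w1 \<or> t = w2" using W(6) that(2) by simp
        thus ?thesis using mK(4) unfolding K_def by auto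
      next
        assume x: "x = u1"
        have "t \<in> {u, u2, m u1}"
          by (rule nbrs3[OF uiV(1) Uc(1) NE2(1) mE[OF uiV(1)] d(1) mne2(1)[symmetric] mne3(1)[symmetric]])
             (use that(2) x in simp)
        thus ?thesis using mK(2) unfolding K_def by auto
      next
        assume x: "x = u2"
        have "t \<in> {u, u1, m u2}"
          by (rule nbrs3[OF uiV(2) Uc(2) NE2(2) mE[OF uiV(2)] d(2) mne2(2)[symmetric] mne3(2)[symmetric]])
             (use that(2) x in simp)
        thus ?thesis using mK(3) unfolding K_def by auto
      next
        assume x: "x = w1"
        have "t \<in> {w, w2, m w1}"
          by (rule nbrs3[OF uiV(3) Uc(3) NE2(3) mE[OF uiV(3)] d(3) mne2(3)[symmetric] mne3(3)[symmetric]])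
             (use that(2) x in simp)
        thus ?thesis using mK(5) unfolding K_def by auto
      next
        assume x: "x = w2"
        have "t \<in> {w, w1, m w2}"
          by (rule nbrs3[OF uiV(4) Uc(4) NE2(4) mE[OF uiV(4)] d(4) mne2(4)[symmetric] mne3(4)[symmetric]])
             (use that(2) x in simp)
        thus ?thesis using mK(6) unfolding K_def by auto
      qed
    qed
    have "V \<subseteq> K" by (rule closed_all[OF conn uV(1)]) (use nb in \<open>auto simp: K_def\<close>)
    moreover have KL: "K = set [u,u1,u2,w,w1,w2]" unfolding K_def by simp
    ultimately have "card V \<le> card (set [u,u1,u2,w,w1,w2])" using card_mono by (metis List.finite_set)
    moreover have "card (set [u,u1,u2,w,w1,w2]) = 6" using distinct_card[OF D] by simp
    ultimately show False using cV n4 by simp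
  qed
  then obtain p q r s where pq: "(p,q) \<in> {(u,u1),(u1,a1),(u,u2),(u2,a2)}"
    and rs: "(r,s) \<in> {(w,w1),(w1,b1),(w,w2),(w2,b2)}" and gd: "m p \<notin> {r,s}" "m q \<notin> {r,s}"
    by auto
  have pqV: "p \<in> V" "q \<in> V" using pq uV uiV aV by auto
  have pqU: "p \<in> {u,u1,u2,a1,a2}" "q \<in> {u,u1,u2,a1,a2}" using pq by auto
  have rsW: "r \<in> {w,w1,w2,b1,b2}" "s \<in> {w,w1,w2,b1,b2}" using rs by auto
  have "p \<noteq> r" "p \<noteq> s" "q \<noteq> r" "q \<noteq> s"
    using UW[OF pqU(1) rsW(1)] UW[OF pqU(1) rsW(2)] UW[OF pqU(2) rsW(1)] UW[OF pqU(2) rsW(2)] by simp_all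
  hence disj: "{p,q} \<inter> {r,s} = {}" by auto
  have Mdisj: "\<forall>e\<in>M. e \<inter> {p,q} = {} \<or> e \<inter> {r,s} = {}"
  proof
    fix e assume e: "e \<in> M"
    show "e \<inter> {p,q} = {} \<or> e \<inter> {r,s} = {}"
    proof (cases "p \<in> e \<or> q \<in> e")
      case True
      hence "e = {p, m p} \<or> e = {q, m q}"
        using matching_unique_edge[OF mM e m[OF pqV(1)]] matching_unique_edge[OF mM e m[OF pqV(2)]] by auto
      thus ?thesis using gd disj by auto
    next
      case False thus ?thesis by auto
    qed
  qed
  have UWd: "{u,u'} \<inter> {w,w'} = {}" if "u' \<in> {u1,u2}" "w' \<in> {w1,w2}" for u' w'
  proof -
    have m1: "u' \<in> {u,u1,u2,a1,a2}" "w' \<in> {w,w1,w2,b1,b2}" using that by auto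
    have m2: "u \<in> {u,u1,u2,a1,a2}" "w \<in> {w,w1,w2,b1,b2}" by simp_all
    have "u \<noteq> w" "u \<noteq> w'" "u' \<noteq> w" "u' \<noteq> w'"
      using UW[OF m2(1) m2(2)] UW[OF m2(1) m1(2)] UW[OF m1(1) m2(2)] UW[OF m1(1) m1(2)] by simp_all
    thus ?thesis by auto
  qed
  show ?thesis
  proof -
    obtain u' a' where ua: "(u',a') \<in> {(u1,a1),(u2,a2)}" "(p,q) \<in> {(u,u'),(u',a')}" using pq by auto
    obtain w' b' where wb: "(w',b') \<in> {(w1,b1),(w2,b2)}" "(r,s) \<in> {(w,w'),(w',b')}" using rs by auto
    have h1: "{u,u'} \<in> R" "{u',a'} \<in> N" "u' \<in> {u1,u2}" using ua(1) UR Na by auto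
    have h2: "{w,w'} \<in> R" "{w',b'} \<in> N" "w' \<in> {w1,w2}" using wb(1) WR Na by auto
    have f: "{p,q} \<in> {{u,u'},{u',a'}}" using ua(2) by auto
    have f': "{r,s} \<in> {{w,w'},{w',b'}}" using wb(2) by auto
    show ?thesis
      by (rule sch[OF h1(1,2) h2(1,2) h1(3) h2(3) UWd[OF h1(3) h2(3)] f f' disj Mdisj])
  qed
qed

end

lemma lower4:
  assumes fin: "finite S" and km: "\<forall>A\<in>S. k_matching E (n-1) A" and U: "\<Union>S = E"
    and cE: "card E = 3*n" and n1: "n \<ge> 1"
  shows "card S \<ge> 4"
proof (rule ccontr)
  assume "\<not> card S \<ge> 4"
  hence c3: "card S \<le> 3" by simp
  have "card E \<le> sum card S" using U card_Union_le_sum_card by metis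
  also have "sum card S = sum (\<lambda>_. n - 1) S" using km unfolding k_matching_def by simp
  also have "\<dots> = card S * (n-1)" by simp
  also have "\<dots> \<le> 3 * (n-1)" using c3 by simp
  finally show False using cE n1 by simp
qed

theorem lemma2:
  fixes V :: "'a set" and E :: "'a set set" and n :: nat
  assumes "simple_graph V E" and "connected_graph V E" and "cubic V E"
    and "card V = 2 * n" and "2 * n \<ge> 8"
    and "perfect_matching V E M" and "matching E N" and "card N = n - 1"
    and "M \<inter> N = {}"
  shows "excessive_index E (n - 1) = 4"
proof -
  interpret cg V E using assms(1,3) by unfold_locales
  have n4: "n \<ge> 4" using assms(5) by simp
  have cE: "card E = 3*n" using handshake assms(4) by simp
  have "cover4 E (n-1)"
  proof (cases "\<exists>P. perfect_matching V (E - M) P")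
    case True
    then obtain P where "perfect_matching V (E - M) P" by blast
    thus ?thesis using case1[OF assms(6) _ assms(4) n4] by blast
  next
    case False
    thus ?thesis using case2[OF assms(2) assms(6) assms(7) assms(8) assms(9) assms(4) n4] by blast
  qed
  then obtain A1 A2 A3 A4 where A: "k_matching E (n-1) A1" "k_matching E (n-1) A2"
      "k_matching E (n-1) A3" "k_matching E (n-1) A4" "A1 \<union> A2 \<union> A3 \<union> A4 = E"
    unfolding cover4_def by blast
  have ex: "\<forall>e\<in>E. \<exists>M. k_matching E (n-1) M \<and> e \<in> M" using A by blast
  define S where "S = {A1,A2,A3,A4}"
  have finS: "finite S" unfolding S_def by simp
  have kmS: "\<forall>A\<in>S. k_matching E (n-1) A" unfolding S_def using A by auto
  have US: "\<Union>S = E" unfolding S_def using A(5) by auto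
  have "card S \<ge> 4" by (rule lower4[OF finS kmS US cE]) (use n4 in simp)
  moreover have "card S \<le> 4"
  proof -
    have "S = set [A1,A2,A3,A4]" unfolding S_def by simp
    thus ?thesis using card_length[of "[A1,A2,A3,A4]"] by simp
  qed
  ultimately have cS: "card S = 4" by simp
  have L: "(LEAST t. \<exists>S. finite S \<and> card S = t \<and> (\<forall>M\<in>S. k_matching E (n-1) M) \<and> \<Union>S = E) = 4"
  proof (rule Least_equality)
    show "\<exists>S. finite S \<and> card S = 4 \<and> (\<forall>M\<in>S. k_matching E (n-1) M) \<and> \<Union>S = E"
      using finS cS kmS US by blast
    fix t assume "\<exists>S. finite S \<and> card S = t \<and> (\<forall>M\<in>S. k_matching E (n-1) M) \<and> \<Union>S = E"
    then obtain S' where "finite S'" "card S' = t" "\<forall>M\<in>S'. k_matching E (n-1) M" "\<Union>S' = E" by blast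
    thus "4 \<le> t" using lower4[of S' E n] cE n4 by simp
  qed
  show ?thesis unfolding excessive_index_def using ex L by (simp add: numeral_eq_enat)
qed

end
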